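(* Let $n\geq 1$ and for $1\leq k\leq n$ let $c(k)$ denote the number of Boolean functions on $n$ variables that are canalizing for exactly $k$ variables. Then: for $1<k<n$, $c(k)=\sum_{r=k}^n\binom{r}{k}(-1)^{r-k}\binom{n}{r}2^{r+1}\bigl(2^{2^{n-r}}-1\bigr)$; for $1<k=n$, $c(n)=2+2^{n+1}$; for $1=k<n$, $c(1)=2n\bigl(2^{1+2^{n-1}}-3\bigr)+\sum_{r=2}^n r(-1)^{r-1}\binom{n}{r}2^{r+1}\bigl(2^{2^{n-r}}-1\bigr)$; for $1=k=n$, $c(1)=4$.
   Context: A Boolean function on $n$ variables is a map $f:\{0,1\}^n\to\{0,1\}$, variables indexed by $[n]=\{0,\dots,n-1\}$. $f$ is canalizing for variable $i$ if there exist $s,v\in\{0,1\}$ such that for all $x\in\{0,1\}^n$, $x_i=s$ implies $f(x)=v$. "Canalizing for exactly $k$ variables" means the set of $i\in[n]$ for which $f$ is canalizing for variable $i$ has exactly $k$ elements. *)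

theory Defs
  imports "HOL-Library.FuncSet"
begin

text \<open>Inputs in {0,1}^n are encoded as maps nat => bool vanishing (False) at all indices >= n.\<close>
definition bool_inputs :: "nat \<Rightarrow> (nat \<Rightarrow> bool) set" where
  "bool_inputs n = {x. \<forall>i\<ge>n. \<not> x i}"

definition bool_funs :: "nat \<Rightarrow> ((nat \<Rightarrow> bool) \<Rightarrow> bool) set" where
  "bool_funs n = bool_inputs n \<rightarrow>\<^sub>E (UNIV :: bool set)"

definition canalizing_var :: "nat \<Rightarrow> ((nat \<Rightarrow> bool) \<Rightarrow> bool) \<Rightarrow> nat \<Rightarrow> bool" where
  "canalizing_var n f i \<longleftrightarrow>
     (\<exists>s v. \<forall>x\<in>bool_inputs n. x i = s \<longrightarrow> f x = v)"

definition canalizing_set :: "nat \<Rightarrow> ((nat \<Rightarrow> bool) \<Rightarrow> bool) \<Rightarrow> nat set" where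
  "canalizing_set n f = {i. i < n \<and> canalizing_var n f i}"

definition canal_count :: "nat \<Rightarrow> nat \<Rightarrow> nat" where
  "canal_count n k = card {f \<in> bool_funs n. card (canalizing_set n f) = k}"

end

theory Submission
  imports Defs
begin

lemma alt_binom:
  fixes m k M :: nat
  assumes "m \<le> M"
  shows "(\<Sum>r=k..M. (-1::int)^(r-k) * of_nat (r choose k) * of_nat (m choose r)) = (if m = k then 1 else 0)"
proof (cases "k \<le> m")
  case False
  then show ?thesis by (intro trans[OF sum.neutral]) auto
next
  case True
  have "(\<Sum>r=k..M. (-1::int)^(r-k) * of_nat (r choose k) * of_nat (m choose r))
      = (\<Sum>r=k..m. (-1::int)^(r-k) * of_nat (r choose k) * of_nat (m choose r))"
    using assms True by (intro sum.mono_neutral_right) auto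
  also have "\<dots> = (\<Sum>r=k..m. of_nat (m choose k) * ((-1::int)^(r-k) * of_nat ((m-k) choose (r-k))))"
  proof (rule sum.cong)
    fix r assume "r \<in> {k..m}"
    then have "(m choose r) * (r choose k) = (m choose k) * ((m - k) choose (r - k))"
      by (intro choose_mult) auto
    then have "(of_nat (r choose k) * of_nat (m choose r) :: int) = of_nat (m choose k) * of_nat ((m - k) choose (r - k))"
      by (metis mult.commute of_nat_mult)
    then show "(-1::int)^(r-k) * of_nat (r choose k) * of_nat (m choose r) = of_nat (m choose k) * ((-1::int)^(r-k) * of_nat ((m-k) choose (r-k)))"
      by (simp add: algebra_simps)
  qed simp
  also have "\<dots> = of_nat (m choose k) * (\<Sum>r=k..m. (-1::int)^(r-k) * of_nat ((m-k) choose (r-k)))"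
    by (simp add: sum_distrib_left)
  also have "(\<Sum>r=k..m. (-1::int)^(r-k) * of_nat ((m-k) choose (r-k))) = (\<Sum>j=0..m-k. (-1::int)^j * of_nat ((m-k) choose j))"
    using sum.shift_bounds_cl_nat_ivl[of "\<lambda>r. (-1::int)^(r-k) * of_nat ((m-k) choose (r-k))" 0 k "m-k"] True
    by simp
  also have "\<dots> = (if m = k then 1 else 0)"
  proof (cases "m = k")
    case True then show ?thesis by simp
  next
    case False
    then have "m - k > 0" using \<open>k \<le> m\<close> by simp
    from choose_alternating_sum[OF this, where 'a=int] show ?thesis using False
      by (simp add: atLeast0AtMost)
  qed
  finally show ?thesis by simp
qed

lemma incl_excl_exact:
  fixes A :: "'a set" and N :: "'a \<Rightarrow> nat set" and U :: "nat set"
  assumes "finite A" "finite U" "\<And>f. f \<in> A \<Longrightarrow> N f \<subseteq> U"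
  shows "int (card {f\<in>A. card (N f) = k}) =
    (\<Sum>r=k..card U. (-1)^(r-k) * int (r choose k) * (\<Sum>S\<in>{S. S \<subseteq> U \<and> card S = r}. int (card {f\<in>A. S \<subseteq> N f})))"
proof -
  have finS: "finite {S. S \<subseteq> U \<and> card S = r}" for r using assms(2) by auto
  have inner: "(\<Sum>S\<in>{S. S \<subseteq> U \<and> card S = r}. int (card {f\<in>A. S \<subseteq> N f}))
     = (\<Sum>f\<in>A. int (card (N f) choose r))" for r
  proof -
    have "(\<Sum>S\<in>{S. S \<subseteq> U \<and> card S = r}. int (card {f\<in>A. S \<subseteq> N f}))
        = (\<Sum>S\<in>{S. S \<subseteq> U \<and> card S = r}. \<Sum>f\<in>A. if S \<subseteq> N f then 1 else 0)"
      apply (rule sum.cong, simp)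
      using assms(1) by (simp add: sum.If_cases Int_def)
    also have "\<dots> = (\<Sum>f\<in>A. \<Sum>S\<in>{S. S \<subseteq> U \<and> card S = r}. if S \<subseteq> N f then 1 else 0)"
      by (rule sum.swap)
    also have "\<dots> = (\<Sum>f\<in>A. int (card (N f) choose r))"
    proof (rule sum.cong)
      fix f assume f: "f \<in> A"
      have "(\<Sum>S\<in>{S. S \<subseteq> U \<and> card S = r}. if S \<subseteq> N f then 1 else 0::int)
          = int (card ({S. S \<subseteq> U \<and> card S = r} \<inter> {S. S \<subseteq> N f}))"
        using finS[of r] by (simp add: sum.If_cases)
      also have "{S. S \<subseteq> U \<and> card S = r} \<inter> {S. S \<subseteq> N f} = {S. S \<subseteq> N f \<and> card S = r}"
        using assms(3)[OF f] by auto
      also have "card \<dots> = card (N f) choose r"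
        using assms(3)[OF f] assms(2) by (intro n_subsets) (meson finite_subset)
      finally show "(\<Sum>S\<in>{S. S \<subseteq> U \<and> card S = r}. if S \<subseteq> N f then 1 else 0::int) = int (card (N f) choose r)" .
    qed simp
    finally show ?thesis .
  qed
  have "(\<Sum>r=k..card U. (-1)^(r-k) * int (r choose k) * (\<Sum>S\<in>{S. S \<subseteq> U \<and> card S = r}. int (card {f\<in>A. S \<subseteq> N f})))
     = (\<Sum>r=k..card U. \<Sum>f\<in>A. (-1)^(r-k) * int (r choose k) * int (card (N f) choose r))"
    by (simp add: inner sum_distrib_left)
  also have "\<dots> = (\<Sum>f\<in>A. \<Sum>r=k..card U. (-1)^(r-k) * int (r choose k) * int (card (N f) choose r))"
    by (rule sum.swap)
  also have "\<dots> = (\<Sum>f\<in>A. if card (N f) = k then 1 else 0)"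
    apply (rule sum.cong, simp)
    apply (rule alt_binom)
    using assms by (meson card_mono)
  also have "\<dots> = int (card {f\<in>A. card (N f) = k})"
    using assms(1) by (simp add: sum.If_cases Int_def)
  finally show ?thesis by simp
qed


lemma inputs_bij:
  fixes B :: "nat \<Rightarrow> bool set"
  shows "bij_betw (\<lambda>x. restrict x {..<n}) {x\<in>bool_inputs n. \<forall>i<n. x i \<in> B i} (PiE {..<n} B)"
proof (rule bij_betwI')
  fix x y assume "x \<in> {x\<in>bool_inputs n. \<forall>i<n. x i \<in> B i}" "y \<in> {x\<in>bool_inputs n. \<forall>i<n. x i \<in> B i}"
  then show "(restrict x {..<n} = restrict y {..<n}) = (x = y)"
    unfolding bool_inputs_def by (auto simp: fun_eq_iff restrict_def) (metis not_le)+
next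
  fix x assume "x \<in> {x\<in>bool_inputs n. \<forall>i<n. x i \<in> B i}"
  then show "restrict x {..<n} \<in> PiE {..<n} B" by auto
next
  fix y assume y: "y \<in> PiE {..<n} B"
  have "(\<lambda>i. if i < n then y i else False) \<in> {x\<in>bool_inputs n. \<forall>i<n. x i \<in> B i}"
    using y by (auto simp: bool_inputs_def)
  moreover have "y = restrict (\<lambda>i. if i < n then y i else False) {..<n}"
    using y by (auto simp: fun_eq_iff restrict_def PiE_def extensional_def)
  ultimately show "\<exists>x\<in>{x\<in>bool_inputs n. \<forall>i<n. x i \<in> B i}. y = restrict x {..<n}" by blast
qed

lemma card_inputs_B:
  fixes B :: "nat \<Rightarrow> bool set"
  shows "card {x\<in>bool_inputs n. \<forall>i<n. x i \<in> B i} = (\<Prod>i<n. card (B i))"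
    and "finite {x\<in>bool_inputs n. \<forall>i<n. x i \<in> B i}"
proof -
  show "card {x\<in>bool_inputs n. \<forall>i<n. x i \<in> B i} = (\<Prod>i<n. card (B i))"
    using bij_betw_same_card[OF inputs_bij[of n B]] card_PiE[of "{..<n}" B] by simp
  show "finite {x\<in>bool_inputs n. \<forall>i<n. x i \<in> B i}"
    using bij_betw_finite[OF inputs_bij[of n B]] by (simp add: finite_PiE)
qed

lemma finite_inputs: "finite (bool_inputs n)"
  using card_inputs_B(2)[of n "\<lambda>_. UNIV"] by simp

lemma card_inputs: "card (bool_inputs n) = 2 ^ n"
  using card_inputs_B(1)[of n "\<lambda>_. UNIV"] by simp

lemma card_inputs_fix:
  assumes "S \<subseteq> {..<n}"
  shows "card {x\<in>bool_inputs n. \<forall>i\<in>S. x i = t i} = 2 ^ (n - card S)"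
proof -
  let ?B = "\<lambda>i. if i \<in> S then {t i} else (UNIV::bool set)"
  have "{x\<in>bool_inputs n. \<forall>i\<in>S. x i = t i} = {x\<in>bool_inputs n. \<forall>i<n. x i \<in> ?B i}"
    using assms by auto
  also have "card \<dots> = (\<Prod>i<n. card (?B i))" by (rule card_inputs_B(1))
  also have "\<dots> = (\<Prod>i<n. if i \<in> S then 1 else 2)"
    by (rule prod.cong) auto
  also have "\<dots> = 2 ^ card ({..<n} \<inter> - S)"
    by (simp add: prod.If_cases)
  also have "card ({..<n} \<inter> - S) = n - card S"
  proof -
    have "{..<n} \<inter> - S = {..<n} - S" by auto
    then show ?thesis using assms card_Diff_subset[of S "{..<n}"] finite_subset[OF assms] by simp
  qed
  finally show ?thesis .
qed

lemma finite_funs: "finite (bool_funs n)"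
  unfolding bool_funs_def by (simp add: finite_PiE finite_inputs)

lemma card_funs_fix:
  assumes "D \<subseteq> bool_inputs n"
  shows "card {f\<in>bool_funs n. \<forall>x\<in>D. f x = g x} = 2 ^ (card (bool_inputs n) - card D)"
proof -
  let ?B = "\<lambda>x. if x \<in> D then {g x} else (UNIV::bool set)"
  have "{f\<in>bool_funs n. \<forall>x\<in>D. f x = g x} = PiE (bool_inputs n) ?B"
    using assms unfolding bool_funs_def by (auto simp: PiE_def Pi_def)
  also have "card \<dots> = (\<Prod>x\<in>bool_inputs n. card (?B x))"
    by (rule card_PiE[OF finite_inputs])
  also have "\<dots> = (\<Prod>x\<in>bool_inputs n. if x \<in> D then 1 else 2)"
    by (rule prod.cong) auto
  also have "\<dots> = 2 ^ card (bool_inputs n \<inter> - D)"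
    by (simp add: prod.If_cases finite_inputs)
  also have "card (bool_inputs n \<inter> - D) = card (bool_inputs n) - card D"
  proof -
    have "bool_inputs n \<inter> - D = bool_inputs n - D" by auto
    then show ?thesis using assms card_Diff_subset[of D "bool_inputs n"] finite_subset[OF assms finite_inputs] by simp
  qed
  finally show ?thesis .
qed


definition nonconst :: "nat \<Rightarrow> ((nat \<Rightarrow> bool) \<Rightarrow> bool) set" where
  "nonconst n = {f\<in>bool_funs n. \<exists>x\<in>bool_inputs n. \<exists>y\<in>bool_inputs n. f x \<noteq> f y}"

definition cfun :: "nat \<Rightarrow> bool \<Rightarrow> (nat \<Rightarrow> bool) \<Rightarrow> bool" where
  "cfun n v = restrict (\<lambda>_. v) (bool_inputs n)"

lemma pt2:
  assumes "i < n" "j < n" "i \<noteq> j"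
  shows "\<exists>x\<in>bool_inputs n. x i = a \<and> x j = b"
  using assms by (intro bexI[of _ "\<lambda>m. if m = i then a else if m = j then b else False"])
    (auto simp: bool_inputs_def)

lemma pt1:
  assumes "i < n"
  shows "\<exists>x\<in>bool_inputs n. x i = a"
  using assms by (intro bexI[of _ "\<lambda>m. if m = i then a else False"])
    (auto simp: bool_inputs_def)

lemma inputs_ne: "(\<lambda>_. False) \<in> bool_inputs n"
  by (simp add: bool_inputs_def)

lemma cfun_in: "cfun n v \<in> bool_funs n"
  by (simp add: cfun_def bool_funs_def)

lemma eq_cfun:
  assumes "f \<in> bool_funs n"
  shows "(f = cfun n v) \<longleftrightarrow> (\<forall>x\<in>bool_inputs n. f x = v)"
  using assms unfolding cfun_def bool_funs_def
  by (auto simp: fun_eq_iff PiE_def extensional_def)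

lemma cfun_neq: "cfun n True \<noteq> cfun n False"
  using inputs_ne[of n] by (auto simp: cfun_def fun_eq_iff)

lemma nonconst_iff:
  assumes "f \<in> bool_funs n"
  shows "f \<in> nonconst n \<longleftrightarrow> f \<noteq> cfun n True \<and> f \<noteq> cfun n False"
  using assms inputs_ne[of n] unfolding nonconst_def eq_cfun[OF assms]
  by auto

lemma canal_cfun: "canalizing_set n (cfun n v) = {..<n}"
  by (auto simp: canalizing_set_def canalizing_var_def cfun_def)

lemma val_general:
  assumes S: "S \<subseteq> {..<n}" "card S = r" "2 \<le> r"
  shows "card {f\<in>nonconst n. S \<subseteq> canalizing_set n f} + 2 ^ (r+1) = 2 ^ (r+1) * 2 ^ (2 ^ (n-r))"
proof -
  have finS: "finite S" using S(1) finite_subset by blast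
  obtain i0 where i0: "i0 \<in> S" using S by fastforce
  have "card (S - {i0}) \<ge> 1" using S i0 finS by simp
  then have "S - {i0} \<noteq> {}" by (metis card.empty not_one_le_zero)
  then obtain j0 where j0: "j0 \<in> S" "j0 \<noteq> i0" by blast
  define C where "C s = {x\<in>bool_inputs n. \<forall>i\<in>S. x i = (\<not> s i)}" for s :: "nat \<Rightarrow> bool"
  define X where "X p = {f\<in>bool_funs n. (\<forall>x\<in>bool_inputs n - C (fst p). f x = snd p) \<and> (\<exists>x\<in>C (fst p). f x \<noteq> snd p)}"
    for p :: "(nat \<Rightarrow> bool) \<times> bool"
  define J where "J = PiE S (\<lambda>_. UNIV::bool set) \<times> (UNIV::bool set)"
  have CI: "C s \<subseteq> bool_inputs n" for s by (auto simp: C_def)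
  have lt: "i < n" if "i \<in> S" for i using S(1) that by auto
  have eq: "{f\<in>nonconst n. S \<subseteq> canalizing_set n f} = \<Union>(X ` J)"
  proof (intro equalityI subsetI)
    fix f assume f: "f \<in> {f\<in>nonconst n. S \<subseteq> canalizing_set n f}"
    then have fF: "f \<in> bool_funs n" and nc: "f \<in> nonconst n" by (auto simp: nonconst_def)
    have "\<forall>i\<in>S. \<exists>p. \<forall>x\<in>bool_inputs n. x i = fst p \<longrightarrow> f x = snd p"
      using f by (auto simp: canalizing_set_def canalizing_var_def)
    then obtain q where q: "\<And>i x. i \<in> S \<Longrightarrow> x \<in> bool_inputs n \<Longrightarrow> x i = fst (q i) \<Longrightarrow> f x = snd (q i)"
      by metis
    define s where "s = restrict (\<lambda>i. fst (q i)) S"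
    define v where "v = snd (q i0)"
    have vi: "snd (q i) = v" if iS: "i \<in> S" for i
    proof (cases "i = i0")
      case False
      obtain x where "x \<in> bool_inputs n" "x i = fst (q i)" "x i0 = fst (q i0)"
        using pt2[OF lt[OF iS] lt[OF i0] False] by blast
      then show ?thesis using q iS i0 unfolding v_def by metis
    qed (simp add: v_def)
    have off: "f x = v" if "x \<in> bool_inputs n - C s" for x
    proof -
      from that obtain i where "i \<in> S" "x i = s i" "x \<in> bool_inputs n" by (auto simp: C_def)
      then show ?thesis using q vi by (auto simp: s_def)
    qed
    have "\<exists>x\<in>C s. f x \<noteq> v"
    proof -
      from nc obtain x y where "x \<in> bool_inputs n" "y \<in> bool_inputs n" "f x \<noteq> f y"
        by (auto simp: nonconst_def)
      then show ?thesis using off by (metis Diff_iff)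
    qed
    then have "f \<in> X (s, v)" using fF off by (auto simp: X_def)
    moreover have "(s, v) \<in> J" by (simp add: J_def s_def)
    ultimately show "f \<in> \<Union>(X ` J)" by blast
  next
    fix f assume "f \<in> \<Union>(X ` J)"
    then obtain s v where sv: "(s, v) \<in> J" "f \<in> X (s, v)" by auto
    then have fF: "f \<in> bool_funs n" and off: "\<And>x. x \<in> bool_inputs n - C s \<Longrightarrow> f x = v"
      and on: "\<exists>x\<in>C s. f x \<noteq> v" by (auto simp: X_def)
    obtain y where y: "y \<in> bool_inputs n" "y i0 = s i0" using pt1[OF lt[OF i0]] by blast
    then have "y \<notin> C s" using i0 by (auto simp: C_def)
    then have "f y = v" using off y by auto
    then have "f \<in> nonconst n" using on fF y CI unfolding nonconst_def by blast
    moreover have "S \<subseteq> canalizing_set n f"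
    proof
      fix i assume i: "i \<in> S"
      have "\<forall>x\<in>bool_inputs n. x i = s i \<longrightarrow> f x = v"
        using off i by (auto simp: C_def)
      then show "i \<in> canalizing_set n f" using lt[OF i] by (auto simp: canalizing_set_def canalizing_var_def)
    qed
    ultimately show "f \<in> {f\<in>nonconst n. S \<subseteq> canalizing_set n f}" by blast
  qed
  have finJ: "finite J" unfolding J_def using finS by (simp add: finite_PiE)
  have cardJ: "card J = 2 ^ r * 2"
  proof -
    have "card (PiE S (\<lambda>_. UNIV::bool set)) = (\<Prod>i\<in>S. card (UNIV::bool set))"
      by (rule card_PiE[OF finS])
    also have "\<dots> = 2 ^ r" using S(2) by simp
    finally show ?thesis unfolding J_def card_cartesian_product by simp
  qed
  have cardC: "card (C s) = 2 ^ (n - r)" for s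
  proof -
    have "card (C s) = 2 ^ (n - card S)" unfolding C_def by (rule card_inputs_fix[OF S(1)])
    then show ?thesis using S(2) by simp
  qed
  have cardX: "card (X p) + 1 = 2 ^ (2 ^ (n - r))" for p
  proof -
    obtain s v where p: "p = (s, v)" by fastforce
    let ?A = "{f\<in>bool_funs n. \<forall>x\<in>bool_inputs n - C s. f x = v}"
    have XA: "X p = ?A - {cfun n v}"
    proof (intro equalityI subsetI)
      fix f assume fX: "f \<in> X p"
      have fA: "f \<in> ?A" using fX unfolding p X_def by simp
      have ex: "\<exists>x\<in>C s. f x \<noteq> v" using fX unfolding p X_def by simp
      have fF: "f \<in> bool_funs n" using fA by simp
      have "f \<noteq> cfun n v"
      proof
        assume fc: "f = cfun n v"
        have all: "\<forall>x\<in>bool_inputs n. f x = v" using iffD1[OF eq_cfun[OF fF] fc] .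
        obtain x where "x \<in> C s" "f x \<noteq> v" using ex by blast
        with all CI[of s] show False by (meson subsetD)
      qed
      then show "f \<in> ?A - {cfun n v}" using fA by simp
    next
      fix f assume f: "f \<in> ?A - {cfun n v}"
      then have "\<exists>x\<in>bool_inputs n. f x \<noteq> v" using eq_cfun[of f n v] by auto
      then show "f \<in> X p" using f unfolding p X_def by auto
    qed
    have cin: "cfun n v \<in> ?A"
    proof -
      have "\<forall>x\<in>bool_inputs n - C s. cfun n v x = v" by (simp add: cfun_def)
      then show ?thesis using cfun_in[of n v] by blast
    qed
    have D: "bool_inputs n - C s \<subseteq> bool_inputs n" by blast
    have c1: "card ?A = 2 ^ (card (bool_inputs n) - card (bool_inputs n - C s))"
      using card_funs_fix[OF D, of "\<lambda>_. v"] by simp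
    have c2: "card (bool_inputs n - C s) = card (bool_inputs n) - card (C s)"
      by (rule card_Diff_subset[OF finite_subset[OF CI finite_inputs] CI])
    have c3: "card (C s) \<le> card (bool_inputs n)"
      by (rule card_mono[OF finite_inputs CI])
    have c4: "card ?A = 2 ^ (2 ^ (n - r))"
      using c1 c2 c3 cardC[of s] by simp
    have finA: "finite ?A" by (rule finite_subset[OF _ finite_funs]) blast
    have "card ?A = Suc (card (?A - {cfun n v}))" by (rule card.remove[OF finA cin])
    then show ?thesis using XA c4 by simp
  qed
  have finX: "finite (X p)" for p using finite_funs by (simp add: X_def)
  have disj: "X p \<inter> X p' = {}" if "p \<in> J" "p' \<in> J" "p \<noteq> p'" for p p'
  proof (rule ccontr)
    assume "X p \<inter> X p' \<noteq> {}"
    then obtain f where f: "f \<in> X p" "f \<in> X p'" by blast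
    obtain s v s' v' where p: "p = (s, v)" "p' = (s', v')" by fastforce
    have off: "\<And>x. x \<in> bool_inputs n - C s \<Longrightarrow> f x = v" using f(1) unfolding p X_def by simp
    have on: "\<exists>x\<in>C s. f x \<noteq> v" using f(1) unfolding p X_def by simp
    have off': "\<And>x. x \<in> bool_inputs n - C s' \<Longrightarrow> f x = v'" using f(2) unfolding p X_def by simp
    obtain x where x: "x \<in> bool_inputs n" "x i0 = s i0" "x j0 = s' j0"
      using pt2[OF lt[OF i0] lt[OF j0(1)] j0(2)[symmetric]] by blast
    have "x \<notin> C s" using x(2) i0 unfolding C_def by blast
    moreover have "x \<notin> C s'" using x(3) j0 unfolding C_def by blast
    ultimately have vv: "v = v'" using off off' x(1) by (metis DiffI)
    have sne: "s \<noteq> s'" using that(3) vv unfolding p by simp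
    have se: "s \<in> extensional S" "s' \<in> extensional S" using that(1,2) unfolding p J_def by (simp_all add: PiE_iff)
    obtain i where i: "i \<in> S" "s i \<noteq> s' i"
      using extensionalityI[OF se] sne by blast
    have "\<forall>x\<in>bool_inputs n. f x = v"
    proof
      fix x assume x: "x \<in> bool_inputs n"
      show "f x = v"
      proof (cases "x i = s i")
        case True then have "x \<notin> C s" using i by (auto simp: C_def)
        then show ?thesis using off x by auto
      next
        case False then have "x i = s' i" using i by auto
        then have "x \<notin> C s'" using i by (auto simp: C_def)
        then show ?thesis using off' x vv by auto
      qed
    qed
    then show False using on CI by blast
  qed
  have "card (\<Union>(X ` J)) = (\<Sum>p\<in>J. card (X p))"
    using finJ finX disj by (intro card_UN_disjoint) auto
  then have "card (\<Union>(X ` J)) + card J = (\<Sum>p\<in>J. card (X p) + 1)"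
    unfolding sum.distrib by simp
  also have "\<dots> = (\<Sum>p\<in>J. 2 ^ (2 ^ (n - r)))" using cardX by (intro sum.cong) auto
  also have "\<dots> = card J * 2 ^ (2 ^ (n - r))" by simp
  finally have "card (\<Union>(X ` J)) + card J = card J * 2 ^ (2 ^ (n - r))" .
  then show ?thesis unfolding eq cardJ by (simp add: power_add mult.commute)
qed


lemma card_funs_const:
  assumes "D \<subseteq> bool_inputs n"
  shows "card {f\<in>bool_funs n. \<forall>x\<in>D. f x = v} = 2 ^ (card (bool_inputs n) - card D)"
  using card_funs_fix[OF assms, of "\<lambda>_. v"] by simp

lemma val_one:
  assumes i: "i < n"
  shows "int (card {f\<in>nonconst n. {i} \<subseteq> canalizing_set n f}) = 4 * 2 ^ (2 ^ (n-1)) - 6"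
proof -
  define m :: nat where "m = 2 ^ (2 ^ (n-1))"
  define H where "H h = {x\<in>bool_inputs n. x i = h}" for h
  define A where "A h = {f\<in>bool_funs n. \<exists>v. \<forall>x\<in>H h. f x = v}" for h
  define g where "g a b = restrict (\<lambda>x. if x i then a else b) (bool_inputs n)" for a b :: bool
  have HI: "H h \<subseteq> bool_inputs n" for h by (auto simp: H_def)
  have cardH: "card (H h) = 2 ^ (n - 1)" for h
  proof -
    have "H h = {x\<in>bool_inputs n. \<forall>j\<in>{i}. x j = (\<lambda>_. h) j}" by (auto simp: H_def)
    also have "card \<dots> = 2 ^ (n - card {i})" by (rule card_inputs_fix) (use i in auto)
    finally show ?thesis by simp
  qed
  have Hne: "\<exists>x. x \<in> H h" for h using pt1[OF i, of h] by (auto simp: H_def)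
  have IH: "bool_inputs n - H h = H (\<not> h)" for h by (auto simp: H_def)
  have cardIH: "card (bool_inputs n) - card (H h) = 2 ^ (n - 1)" for h
  proof -
    have "card (bool_inputs n - H h) = card (bool_inputs n) - card (H h)"
      by (rule card_Diff_subset[OF finite_subset[OF HI finite_inputs] HI])
    then show ?thesis using IH cardH by metis
  qed
  have finA: "finite (A h)" for h by (rule finite_subset[OF _ finite_funs]) (auto simp: A_def)
  have cardA: "card (A h) = 2 * m" for h
  proof -
    have split: "A h = {f\<in>bool_funs n. \<forall>x\<in>H h. f x = True} \<union> {f\<in>bool_funs n. \<forall>x\<in>H h. f x = False}"
      unfolding A_def by auto
    have dis: "{f\<in>bool_funs n. \<forall>x\<in>H h. f x = True} \<inter> {f\<in>bool_funs n. \<forall>x\<in>H h. f x = False} = {}"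
      using Hne[of h] by auto
    have c: "card {f\<in>bool_funs n. \<forall>x\<in>H h. f x = v} = m" for v
      using card_funs_const[OF HI[of h], of v] cardIH[of h] by (simp add: m_def)
    have "card (A h) = card {f\<in>bool_funs n. \<forall>x\<in>H h. f x = True} + card {f\<in>bool_funs n. \<forall>x\<in>H h. f x = False}"
      unfolding split by (rule card_Un_disjoint) (use finite_funs dis in auto)
    then show ?thesis using c[of True] c[of False] by linarith
  qed
  have g_in: "g a b \<in> bool_funs n" for a b by (simp add: g_def bool_funs_def)
  have g_inj: "(g a b = g c d) \<longleftrightarrow> (a = c \<and> b = d)" for a b c d
  proof
    assume e: "g a b = g c d"
    obtain x where x: "x \<in> bool_inputs n" "x i = True" using pt1[OF i] by blast
    obtain y where y: "y \<in> bool_inputs n" "y i = False" using pt1[OF i] by blast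
    have "g a b x = g c d x" "g a b y = g c d y" using e by simp_all
    then show "a = c \<and> b = d" using x y by (simp add: g_def)
  qed simp
  have AA: "A True \<inter> A False = {g True True, g True False, g False True, g False False}"
  proof (intro equalityI subsetI)
    fix f assume f: "f \<in> A True \<inter> A False"
    then have fF: "f \<in> bool_funs n" by (simp add: A_def)
    obtain a where a: "\<forall>x\<in>H True. f x = a" using f by (auto simp: A_def)
    obtain b where b: "\<forall>x\<in>H False. f x = b" using f by (auto simp: A_def)
    have "f = g a b"
    proof (rule extensionalityI[of _ "bool_inputs n"])
      show "f \<in> extensional (bool_inputs n)" using fF by (simp add: bool_funs_def PiE_iff)
      show "g a b \<in> extensional (bool_inputs n)" by (simp add: g_def)
      fix x assume x: "x \<in> bool_inputs n"
      show "f x = g a b x"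
      proof (cases "x i")
        case True then show ?thesis using a x by (simp add: g_def H_def)
      next
        case False then show ?thesis using b x by (simp add: g_def H_def)
      qed
    qed
    then show "f \<in> {g True True, g True False, g False True, g False False}"
      by (cases a; cases b) auto
  next
    fix f assume "f \<in> {g True True, g True False, g False True, g False False}"
    then obtain a b where f: "f = g a b" by blast
    have "\<forall>x\<in>H h. f x = (if h then a else b)" for h by (auto simp: f g_def H_def)
    then show "f \<in> A True \<inter> A False" using g_in f unfolding A_def by blast
  qed
  have cardAA: "card (A True \<inter> A False) = 4" unfolding AA using g_inj by simp
  have cardU: "card (A True \<union> A False) + 4 = 4 * m"
    using card_Un_Int[OF finA finA, of True False] cardAA cardA by simp
  have cA: "cfun n v \<in> A h" for v h
  proof -
    have "\<forall>x\<in>H h. cfun n v x = v" by (simp add: cfun_def H_def)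
    then show ?thesis using cfun_in[of n v] unfolding A_def by blast
  qed
  have eqT: "{f\<in>nonconst n. {i} \<subseteq> canalizing_set n f} = (A True \<union> A False) - {cfun n True, cfun n False}"
  proof (intro equalityI subsetI)
    fix f assume f: "f \<in> {f\<in>nonconst n. {i} \<subseteq> canalizing_set n f}"
    then have nc: "f \<in> nonconst n" by blast
    then have fF: "f \<in> bool_funs n" unfolding nonconst_def by blast
    from f have "i \<in> canalizing_set n f" by blast
    then have "canalizing_var n f i" unfolding canalizing_set_def by blast
    then obtain s v where sv: "\<forall>x\<in>bool_inputs n. x i = s \<longrightarrow> f x = v"
      unfolding canalizing_var_def by blast
    then have "\<forall>x\<in>H s. f x = v" unfolding H_def by blast
    then have "f \<in> A s" using fF unfolding A_def by blast
    then have "f \<in> A True \<union> A False" by (cases s) auto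
    moreover have "f \<noteq> cfun n True" "f \<noteq> cfun n False" using nonconst_iff[OF fF] nc by blast+
    ultimately show "f \<in> (A True \<union> A False) - {cfun n True, cfun n False}" by blast
  next
    fix f assume f: "f \<in> (A True \<union> A False) - {cfun n True, cfun n False}"
    then obtain s where fs: "f \<in> A s" by blast
    then have fF: "f \<in> bool_funs n" unfolding A_def by blast
    have "f \<noteq> cfun n True" "f \<noteq> cfun n False" using f by blast+
    then have "f \<in> nonconst n" using nonconst_iff[OF fF] by blast
    moreover from fs obtain v where "\<forall>x\<in>H s. f x = v" unfolding A_def by blast
    then have "canalizing_var n f i" unfolding canalizing_var_def H_def by blast
    then have "i \<in> canalizing_set n f" using i unfolding canalizing_set_def by blast
    ultimately show "f \<in> {f\<in>nonconst n. {i} \<subseteq> canalizing_set n f}" by blast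
  qed
  have sub: "{cfun n True, cfun n False} \<subseteq> A True \<union> A False" using cA by blast
  have c2: "card {cfun n True, cfun n False} = 2" using cfun_neq[of n] by simp
  have finU: "finite (A True \<union> A False)" using finA by blast
  have "card ((A True \<union> A False) - {cfun n True, cfun n False}) = card (A True \<union> A False) - 2"
    using card_Diff_subset[OF finite_subset[OF sub finU] sub] c2 by simp
  moreover have "card (A True \<union> A False) \<ge> 2"
    using card_mono[OF finU sub] c2 by simp
  ultimately have k1: "card ((A True \<union> A False) - {cfun n True, cfun n False}) + 6 = 4 * m"
    using cardU by linarith
  have k2: "card {f\<in>nonconst n. {i} \<subseteq> canalizing_set n f} + 6 = 4 * m"
    unfolding eqT by (rule k1)
  have "int (card {f\<in>nonconst n. {i} \<subseteq> canalizing_set n f} + 6) = int (4 * m)"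
    using k2 by (rule arg_cong)
  then show ?thesis unfolding m_def by simp
qed


definition val :: "nat \<Rightarrow> nat \<Rightarrow> int" where
  "val n r = (if r = 1 then 4 * 2 ^ (2 ^ (n-1)) - 6 else 2 ^ (r+1) * (2 ^ (2 ^ (n-r)) - 1))"

lemma val_S:
  assumes "S \<subseteq> {..<n}" "card S = r" "1 \<le> r"
  shows "int (card {f\<in>nonconst n. S \<subseteq> canalizing_set n f}) = val n r"
proof (cases "r = 1")
  case True
  then obtain i where S: "S = {i}" using assms(2) card_1_singletonE by blast
  then have "i < n" using assms(1) by auto
  then show ?thesis using val_one[of i n] S True by (simp add: val_def)
next
  case False
  then have r2: "2 \<le> r" using assms(3) by simp
  have e: "card {f\<in>nonconst n. S \<subseteq> canalizing_set n f} + 2 ^ (r+1) = 2 ^ (r+1) * 2 ^ (2 ^ (n-r))"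
    by (rule val_general[OF assms(1,2) r2])
  have "int (card {f\<in>nonconst n. S \<subseteq> canalizing_set n f} + 2 ^ (r+1)) = int (2 ^ (r+1) * 2 ^ (2 ^ (n-r)))"
    using e by (rule arg_cong)
  then have "int (card {f\<in>nonconst n. S \<subseteq> canalizing_set n f}) = 2 ^ (r+1) * 2 ^ (2 ^ (n-r)) - 2 ^ (r+1)"
    by simp
  then show ?thesis using False by (simp add: val_def algebra_simps)
qed

lemma formula:
  assumes "1 \<le> k"
  shows "int (card {f\<in>nonconst n. card (canalizing_set n f) = k}) =
    (\<Sum>r=k..n. (-1)^(r-k) * int (r choose k) * (int (n choose r) * val n r))"
proof -
  have finNC: "finite (nonconst n)" by (rule finite_subset[OF _ finite_funs]) (auto simp: nonconst_def)
  have "int (card {f\<in>nonconst n. card (canalizing_set n f) = k}) =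
    (\<Sum>r=k..card {..<n}. (-1)^(r-k) * int (r choose k) * (\<Sum>S\<in>{S. S \<subseteq> {..<n} \<and> card S = r}. int (card {f\<in>nonconst n. S \<subseteq> canalizing_set n f})))"
    by (rule incl_excl_exact[OF finNC]) (auto simp: canalizing_set_def)
  also have "\<dots> = (\<Sum>r=k..n. (-1)^(r-k) * int (r choose k) * (int (n choose r) * val n r))"
  proof (rule sum.cong)
    fix r assume r: "r \<in> {k..n}"
    have "(\<Sum>S\<in>{S. S \<subseteq> {..<n} \<and> card S = r}. int (card {f\<in>nonconst n. S \<subseteq> canalizing_set n f}))
        = (\<Sum>S\<in>{S. S \<subseteq> {..<n} \<and> card S = r}. val n r)"
      using r assms by (intro sum.cong refl val_S) auto
    also have "\<dots> = int (n choose r) * val n r"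
      using n_subsets[of "{..<n}" r] by simp
    finally show "(-1)^(r-k) * int (r choose k) * (\<Sum>S\<in>{S. S \<subseteq> {..<n} \<and> card S = r}. int (card {f\<in>nonconst n. S \<subseteq> canalizing_set n f}))
       = (-1)^(r-k) * int (r choose k) * (int (n choose r) * val n r)" by simp
  qed simp
  finally show ?thesis .
qed

lemma count_split:
  "int (canal_count n k) = int (card {f\<in>nonconst n. card (canalizing_set n f) = k}) + (if k = n then 2 else 0)"
proof -
  let ?P = "\<lambda>f. card (canalizing_set n f) = k"
  have FU: "bool_funs n = nonconst n \<union> {cfun n True, cfun n False}"
    using nonconst_iff cfun_in by (auto simp: nonconst_def)
  have "{f\<in>bool_funs n. ?P f} = {f\<in>nonconst n. ?P f} \<union> {f\<in>{cfun n True, cfun n False}. ?P f}"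
    using FU by blast
  moreover have "{f\<in>nonconst n. ?P f} \<inter> {f\<in>{cfun n True, cfun n False}. ?P f} = {}"
    using nonconst_iff cfun_in by blast
  moreover have "finite (nonconst n)" by (rule finite_subset[OF _ finite_funs]) (auto simp: nonconst_def)
  ultimately have "card {f\<in>bool_funs n. ?P f} = card {f\<in>nonconst n. ?P f} + card {f\<in>{cfun n True, cfun n False}. ?P f}"
    by (simp add: card_Un_disjoint)
  moreover have "{f\<in>{cfun n True, cfun n False}. ?P f} = (if k = n then {cfun n True, cfun n False} else {})"
    by (auto simp: canal_cfun)
  moreover have "card {cfun n True, cfun n False} = 2" using cfun_neq[of n] by simp
  ultimately show ?thesis unfolding canal_count_def by auto
qed

theorem mainTheorem8:
  fixes n k :: nat
  assumes "1 \<le> n" and "1 \<le> k" and "k \<le> n"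
  shows "(1 < k \<and> k < n \<longrightarrow>
            int (canal_count n k) =
              (\<Sum>r=k..n. int (r choose k) * (-1) ^ (r - k) * int (n choose r) * 2 ^ (r + 1)
                          * (2 ^ (2 ^ (n - r)) - 1)))
       \<and> (1 < k \<and> k = n \<longrightarrow> int (canal_count n n) = 2 + 2 ^ (n + 1))
       \<and> (1 = k \<and> k < n \<longrightarrow>
            int (canal_count n 1) =
              2 * int n * (2 ^ (1 + 2 ^ (n - 1)) - 3)
              + (\<Sum>r=2..n. int r * (-1) ^ (r - 1) * int (n choose r) * 2 ^ (r + 1)
                          * (2 ^ (2 ^ (n - r)) - 1)))
       \<and> (1 = k \<and> k = n \<longrightarrow> int (canal_count n 1) = 4)"
proof (intro conjI impI)
  have main: "int (canal_count n k) = (\<Sum>r=k..n. (-1)^(r-k) * int (r choose k) * (int (n choose r) * val n r)) + (if k = n then 2 else 0)"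
    using count_split formula[OF assms(2)] by simp
  {
    assume a: "1 < k \<and> k < n"
    show "int (canal_count n k) =
              (\<Sum>r=k..n. int (r choose k) * (-1) ^ (r - k) * int (n choose r) * 2 ^ (r + 1)
                          * (2 ^ (2 ^ (n - r)) - 1))"
      unfolding main using a by (auto intro!: sum.cong simp: val_def)
  }
  {
    assume a: "1 < k \<and> k = n"
    then show "int (canal_count n n) = 2 + 2 ^ (n + 1)"
      using main by (simp add: val_def)
  }
  {
    assume a: "1 = k \<and> k < n"
    then have k1: "k = 1" by simp
    have "(\<Sum>r=1..n. (-1)^(r-1) * int (r choose 1) * (int (n choose r) * val n r))
        = (-1)^(1-1) * int (1 choose 1) * (int (n choose 1) * val n 1)
          + (\<Sum>r=Suc 1..n. (-1)^(r-1) * int (r choose 1) * (int (n choose r) * val n r))"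
      using assms(1) by (rule sum.atLeast_Suc_atMost)
    also have "(-1)^(1-1) * int (1 choose 1) * (int (n choose 1) * val n 1) = 2 * int n * (2 ^ (1 + 2 ^ (n - 1)) - 3)"
      by (simp add: val_def algebra_simps)
    also have "(\<Sum>r=Suc 1..n. (-1)^(r-1) * int (r choose 1) * (int (n choose r) * val n r))
       = (\<Sum>r=2..n. int r * (-1) ^ (r - 1) * int (n choose r) * 2 ^ (r + 1) * (2 ^ (2 ^ (n - r)) - 1))"
      by (auto intro!: sum.cong simp: val_def)
    finally show "int (canal_count n 1) =
              2 * int n * (2 ^ (1 + 2 ^ (n - 1)) - 3)
              + (\<Sum>r=2..n. int r * (-1) ^ (r - 1) * int (n choose r) * 2 ^ (r + 1)
                          * (2 ^ (2 ^ (n - r)) - 1))"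
      using main a k1 by simp
  }
  {
    assume a: "1 = k \<and> k = n"
    then have "n = 1" "k = 1" by simp_all
    then show "int (canal_count n 1) = 4"
      using main by (simp add: val_def)
  }
qed

end
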